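(* Let $x,y\in V(D^+)$ with $y\prec x$. If $d_s(I_s(x))<d_s(y)$, then $I_s(x)\prec y$. If $d_s(I_t(y))>d_s(x)$, then $x\prec I_t(y)$.
   Context: $G=(V,E,w)$ is a simple, connected, undirected graph with positive edge lengths, $s,t\in V$, and $d(\cdot,\cdot)$ is the shortest path distance in $G$; $d_s(v)=d(s,v)$, $d_t(v)=d(v,t)$. $D$ is the union of all shortest $st$-paths of $G$, and $D^+$ is the directed acyclic graph obtained from $D$ by orienting every edge toward $t$. For $x,y\in V(D^+)$, $x\prec y$ means $x$ is an ancestor of $y$ in $D^+$ (a directed path of positive length from $x$ to $y$ exists), and $x\preceq y$ means $x\prec y$ or $x=y$. For $x\neq s$, $v\neq x$ is an $s$-dominator of $x$ if every directed path from $s$ to $x$ in $D^+$ contains $v$, and $I_s(x)$ is the $s$-dominator of $x$ closest to $x$ (every other $s$-dominator of $x$ is an $s$-dominator of $I_s(x)$). Symmetrically, for $x\neq t$, $v\neq x$ is a $t$-dominator of $x$ if every directed path from $x$ to $t$ in $D^+$ contains $v$, and $I_t(x)$ is the $t$-dominator of $x$ closest to $x$. *)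

theory Defs
  imports Complex_Main
begin

definition walk :: "('a \<times> 'a) set \<Rightarrow> 'a list \<Rightarrow> bool" where
  "walk E xs \<longleftrightarrow> xs \<noteq> [] \<and> (\<forall>i. Suc i < length xs \<longrightarrow> (xs ! i, xs ! Suc i) \<in> E)"

definition walk_len :: "('a \<Rightarrow> 'a \<Rightarrow> real) \<Rightarrow> 'a list \<Rightarrow> real" where
  "walk_len w xs = (\<Sum>i<length xs - 1. w (xs ! i) (xs ! Suc i))"

definition connected_graph :: "'a set \<Rightarrow> ('a \<times> 'a) set \<Rightarrow> bool" where
  "connected_graph V E \<longleftrightarrow>
     (\<forall>u\<in>V. \<forall>v\<in>V. \<exists>xs. walk E xs \<and> hd xs = u \<and> last xs = v)"

definition wgraph :: "'a set \<Rightarrow> ('a \<times> 'a) set \<Rightarrow> ('a \<Rightarrow> 'a \<Rightarrow> real) \<Rightarrow> bool" where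
  "wgraph V E w \<longleftrightarrow> finite V \<and> E \<subseteq> V \<times> V \<and> sym E \<and> irrefl E
     \<and> (\<forall>u v. (u, v) \<in> E \<longrightarrow> w u v > 0 \<and> w u v = w v u)
     \<and> connected_graph V E"

definition gdist :: "('a \<times> 'a) set \<Rightarrow> ('a \<Rightarrow> 'a \<Rightarrow> real) \<Rightarrow> 'a \<Rightarrow> 'a \<Rightarrow> real" where
  "gdist E w u v = Inf {walk_len w xs | xs. walk E xs \<and> hd xs = u \<and> last xs = v}"

text \<open>Shortest s-t paths (with positive lengths, shortest walks are paths).\<close>
definition shortest_path :: "('a \<times> 'a) set \<Rightarrow> ('a \<Rightarrow> 'a \<Rightarrow> real) \<Rightarrow> 'a \<Rightarrow> 'a \<Rightarrow> 'a list \<Rightarrow> bool" where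
  "shortest_path E w s t xs \<longleftrightarrow> walk E xs \<and> hd xs = s \<and> last xs = t
     \<and> walk_len w xs = gdist E w s t"

definition DV :: "('a \<times> 'a) set \<Rightarrow> ('a \<Rightarrow> 'a \<Rightarrow> real) \<Rightarrow> 'a \<Rightarrow> 'a \<Rightarrow> 'a set" where
  "DV E w s t = {v. \<exists>xs. shortest_path E w s t xs \<and> v \<in> set xs}"

definition DA :: "('a \<times> 'a) set \<Rightarrow> ('a \<Rightarrow> 'a \<Rightarrow> real) \<Rightarrow> 'a \<Rightarrow> 'a \<Rightarrow> ('a \<times> 'a) set" where
  "DA E w s t = {(xs ! i, xs ! Suc i) | xs i. shortest_path E w s t xs \<and> Suc i < length xs}"

definition prec :: "('a \<times> 'a) set \<Rightarrow> ('a \<Rightarrow> 'a \<Rightarrow> real) \<Rightarrow> 'a \<Rightarrow> 'a \<Rightarrow> 'a \<Rightarrow> 'a \<Rightarrow> bool" where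
  "prec E w s t x y \<longleftrightarrow> (x, y) \<in> (DA E w s t)\<^sup>+"

definition dpath :: "('a \<times> 'a) set \<Rightarrow> ('a \<Rightarrow> 'a \<Rightarrow> real) \<Rightarrow> 'a \<Rightarrow> 'a \<Rightarrow> 'a \<Rightarrow> 'a \<Rightarrow> 'a list \<Rightarrow> bool" where
  "dpath E w s t a b xs \<longleftrightarrow> walk (DA E w s t) xs \<and> hd xs = a \<and> last xs = b"

definition s_dom :: "('a \<times> 'a) set \<Rightarrow> ('a \<Rightarrow> 'a \<Rightarrow> real) \<Rightarrow> 'a \<Rightarrow> 'a \<Rightarrow> 'a \<Rightarrow> 'a \<Rightarrow> bool" where
  "s_dom E w s t v x \<longleftrightarrow> v \<noteq> x \<and> (\<forall>xs. dpath E w s t s x xs \<longrightarrow> v \<in> set xs)"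

definition t_dom :: "('a \<times> 'a) set \<Rightarrow> ('a \<Rightarrow> 'a \<Rightarrow> real) \<Rightarrow> 'a \<Rightarrow> 'a \<Rightarrow> 'a \<Rightarrow> 'a \<Rightarrow> bool" where
  "t_dom E w s t v x \<longleftrightarrow> v \<noteq> x \<and> (\<forall>xs. dpath E w s t x t xs \<longrightarrow> v \<in> set xs)"

definition I_s :: "('a \<times> 'a) set \<Rightarrow> ('a \<Rightarrow> 'a \<Rightarrow> real) \<Rightarrow> 'a \<Rightarrow> 'a \<Rightarrow> 'a \<Rightarrow> 'a" where
  "I_s E w s t x = (THE v. s_dom E w s t v x \<and>
      (\<forall>u. s_dom E w s t u x \<and> u \<noteq> v \<longrightarrow> s_dom E w s t u v))"

definition I_t :: "('a \<times> 'a) set \<Rightarrow> ('a \<Rightarrow> 'a \<Rightarrow> real) \<Rightarrow> 'a \<Rightarrow> 'a \<Rightarrow> 'a \<Rightarrow> 'a" where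
  "I_t E w s t x = (THE v. t_dom E w s t v x \<and>
      (\<forall>u. t_dom E w s t u x \<and> u \<noteq> v \<longrightarrow> t_dom E w s t u v))"

end

theory Submission
  imports Defs
begin

lemma walk_Nil[simp]: "\<not> walk A []" by (simp add: walk_def)
lemma walk_single[simp]: "walk A [a]" by (simp add: walk_def)
lemma walk_cons2[simp]: "walk A (a#b#r) = ((a,b)\<in>A \<and> walk A (b#r))"
  unfolding walk_def by (auto simp: nth_Cons split: nat.splits)

lemma walk_append:
  "q \<noteq> [] \<Longrightarrow> r \<noteq> [] \<Longrightarrow> walk A (q@r) = (walk A q \<and> walk A r \<and> (last q, hd r) \<in> A)"
proof (induction q)
  case Nil then show ?case by simp
next
  case (Cons a q)
  show ?case
  proof (cases q)
    case Nil
    then show ?thesis using Cons.prems by (cases r) auto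
  next
    case (Cons c q')
    then show ?thesis using Cons.IH Cons.prems by auto
  qed
qed

lemma walk_rev: "walk A xs \<Longrightarrow> walk (A\<inverse>) (rev xs)"
proof (induction xs)
  case Nil then show ?case by simp
next
  case (Cons a xs)
  show ?case
  proof (cases xs)
    case Nil then show ?thesis by simp
  next
    case (Cons b r)
    then have "walk (A\<inverse>) (rev xs)" "(b,a)\<in>A\<inverse>" using Cons.IH Cons.prems by auto
    then show ?thesis using Cons by (simp add: walk_append[of "rev r @ [b]" "[a]", simplified])
  qed
qed

lemma rtrancl_walk: "(a,b) \<in> A\<^sup>* \<Longrightarrow> \<exists>xs. walk A xs \<and> hd xs = a \<and> last xs = b"
proof (induction rule: rtrancl_induct)
  case base then show ?case by (intro exI[of _ "[a]"]) simp
next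
  case (step y z)
  then obtain xs where "walk A xs" "hd xs = a" "last xs = y" by blast
  moreover have "xs \<noteq> []" using \<open>walk A xs\<close> walk_def by blast
  ultimately show ?case using step by (intro exI[of _ "xs@[z]"]) (simp add: walk_append)
qed

lemma walk_nth_rtrancl:
  assumes "walk A xs" "i \<le> j" "j < length xs" shows "(xs!i, xs!j) \<in> A\<^sup>*"
  using assms(2,3)
proof (induction j rule: dec_induct)
  case base then show ?case by simp
next
  case (step j)
  then have "(xs!j, xs!Suc j) \<in> A" using assms(1) unfolding walk_def by blast
  then show ?case using step by (meson Suc_lessD rtrancl.rtrancl_into_rtrancl)
qed

lemma walk_mem:
  assumes "walk A R" "v \<in> set R" shows "(hd R, v) \<in> A\<^sup>* \<and> (v, last R) \<in> A\<^sup>*"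
proof -
  obtain i where i: "i < length R" "R!i = v" using assms(2) by (meson in_set_conv_nth)
  have ne: "R \<noteq> []" using assms(2) by auto
  have "(R!0, R!i) \<in> A\<^sup>*" using walk_nth_rtrancl[OF assms(1), of 0 i] i by simp
  moreover have "(R!i, R!(length R - 1)) \<in> A\<^sup>*" using walk_nth_rtrancl[OF assms(1), of i "length R - 1"] i by simp
  ultimately show ?thesis using i ne by (simp add: hd_conv_nth last_conv_nth)
qed

lemma walk_nth_trancl:
  assumes "walk A xs" "i < j" "j < length xs" shows "(xs!i, xs!j) \<in> A\<^sup>+"
proof -
  have "(xs!i, xs!Suc i) \<in> A" using assms unfolding walk_def by auto
  moreover have "(xs!Suc i, xs!j) \<in> A\<^sup>*" using walk_nth_rtrancl[of A xs "Suc i" j] assms by simp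
  ultimately show ?thesis by (meson rtrancl_into_trancl2)
qed

lemma join:
  assumes "(a,b) \<in> A\<^sup>*" "(b,c) \<in> A\<^sup>*"
  shows "\<exists>R. walk A R \<and> hd R = a \<and> last R = c \<and>
     (\<forall>v\<in>set R. ((a,v)\<in>A\<^sup>* \<and> (v,b)\<in>A\<^sup>*) \<or> ((b,v)\<in>A\<^sup>* \<and> (v,c)\<in>A\<^sup>*))"
  using assms(2)
proof (induction rule: rtrancl_induct)
  case base
  obtain R where R: "walk A R" "hd R = a" "last R = b" using rtrancl_walk[OF assms(1)] by blast
  then show ?case using walk_mem[OF R(1)] by (intro exI[of _ R]) auto
next
  case (step y z)
  then obtain R where R: "walk A R" "hd R = a" "last R = y"
    "\<forall>v\<in>set R. ((a,v)\<in>A\<^sup>* \<and> (v,b)\<in>A\<^sup>*) \<or> ((b,v)\<in>A\<^sup>* \<and> (v,y)\<in>A\<^sup>*)" by blast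
  have ne: "R \<noteq> []" using R(1) walk_def by blast
  have "walk A (R@[z])" using R ne step by (simp add: walk_append)
  moreover have "\<forall>v\<in>set (R@[z]). ((a,v)\<in>A\<^sup>* \<and> (v,b)\<in>A\<^sup>*) \<or> ((b,v)\<in>A\<^sup>* \<and> (v,z)\<in>A\<^sup>*)"
    using R(4) step by (auto intro: rtrancl_into_rtrancl)
  ultimately show ?case using R ne by (intro exI[of _ "R@[z]"]) auto
qed

lemma mono_trancl:
  fixes f :: "'a \<Rightarrow> real"
  assumes "\<And>a b. (a,b)\<in>A \<Longrightarrow> f a < f b" "(a,b) \<in> A\<^sup>+" shows "f a < f b"
  using assms(2) by (induction rule: trancl_induct) (auto dest: assms(1))

lemma mono_rtrancl:
  fixes f :: "'a \<Rightarrow> real"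
  assumes "\<And>a b. (a,b)\<in>A \<Longrightarrow> f a < f b" "(a,b) \<in> A\<^sup>*" shows "f a \<le> f b"
proof -
  have "a = b \<or> (a,b) \<in> A\<^sup>+" using assms(2) by (meson rtranclD)
  then show ?thesis using mono_trancl[of A f a b, OF assms(1)] by fastforce
qed


lemma wl_Nil[simp]: "walk_len w [] = 0" by (simp add: walk_len_def)
lemma wl_single[simp]: "walk_len w [a] = 0" by (simp add: walk_len_def)
lemma wl_cons2[simp]: "walk_len w (a#b#r) = w a b + walk_len w (b#r)"
  unfolding walk_len_def by (simp add: sum.lessThan_Suc_shift del: sum.lessThan_Suc)

lemma wl_append:
  "q \<noteq> [] \<Longrightarrow> r \<noteq> [] \<Longrightarrow> walk_len w (q@r) = walk_len w q + w (last q) (hd r) + walk_len w r"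
proof (induction q)
  case Nil then show ?case by simp
next
  case (Cons a q)
  show ?case
  proof (cases q)
    case Nil
    then show ?thesis using Cons.prems by (cases r) auto
  next
    case (Cons c q')
    then show ?thesis using Cons.IH Cons.prems by auto
  qed
qed

lemma wl_nonneg:
  assumes "wgraph V E w" "walk E q" shows "walk_len w q \<ge> 0"
  unfolding walk_len_def
proof (rule sum_nonneg)
  fix i assume "i \<in> {..<length q - 1}"
  then have "(q!i, q!Suc i) \<in> E" using assms(2) unfolding walk_def by auto
  then show "w (q!i) (q!Suc i) \<ge> 0" using assms(1) unfolding wgraph_def by (meson less_imp_le)
qed

lemma gdist_le:
  assumes "wgraph V E w" "walk E q" "hd q = u" "last q = v"
  shows "gdist E w u v \<le> walk_len w q"
  unfolding gdist_def
proof (rule cInf_lower)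
  show "walk_len w q \<in> {walk_len w xs |xs. walk E xs \<and> hd xs = u \<and> last xs = v}" using assms by blast
  show "bdd_below {walk_len w xs |xs. walk E xs \<and> hd xs = u \<and> last xs = v}"
    using wl_nonneg[OF assms(1)] by (intro bdd_belowI[of _ 0]) blast
qed

lemma walk_take: "walk A xs \<Longrightarrow> 0 < n \<Longrightarrow> walk A (take n xs)"
  unfolding walk_def by auto

lemma walk_drop: "walk A xs \<Longrightarrow> n < length xs \<Longrightarrow> walk A (drop n xs)"
  unfolding walk_def by auto

lemma last_take_nth: "j < length xs \<Longrightarrow> last (take (Suc j) xs) = xs ! j"
proof (induction xs arbitrary: j)
  case Nil then show ?case by simp
next
  case (Cons a xs) then show ?case by (cases j) auto
qed

lemma prefix_dist:
  assumes g: "wgraph V E w" and sp: "shortest_path E w s t xs" and j: "j < length xs"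
  shows "gdist E w s (xs!j) = walk_len w (take (Suc j) xs)"
proof -
  have W: "walk E xs" "hd xs = s" "last xs = t" "walk_len w xs = gdist E w s t"
    using sp unfolding shortest_path_def by auto
  have ne: "xs \<noteq> []" using j by auto
  define pre where "pre = take (Suc j) xs"
  have wp: "walk E pre" "hd pre = s" "last pre = xs!j" "pre \<noteq> []"
  proof -
    show "walk E pre" using walk_take[OF W(1)] unfolding pre_def by simp
    show "hd pre = s" using W(2) ne unfolding pre_def by (simp add: hd_take)
    show "pre \<noteq> []" using ne unfolding pre_def by simp
    show "last pre = xs!j" using last_take_nth[OF j] unfolding pre_def .
  qed
  have le: "gdist E w s (xs!j) \<le> walk_len w pre" using gdist_le[OF g wp(1-3)] .
  have ge: "\<not> gdist E w s (xs!j) < walk_len w pre"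
  proof
    assume lt: "gdist E w s (xs!j) < walk_len w pre"
    have "walk_len w pre \<in> {walk_len w zs |zs. walk E zs \<and> hd zs = s \<and> last zs = xs!j}"
      using wp by (intro CollectI exI[of _ pre]) simp
    then have "{walk_len w zs |zs. walk E zs \<and> hd zs = s \<and> last zs = xs!j} \<noteq> {}" by blast
    from cInf_lessD[OF this lt[unfolded gdist_def]]
    obtain q where q: "walk E q" "hd q = s" "last q = xs!j" "walk_len w q < walk_len w pre"
      by blast
    have qne: "q \<noteq> []" using q(1) by (cases q) auto
    show False
    proof (cases "Suc j = length xs")
      case True
      then have "pre = xs" unfolding pre_def by simp
      moreover have "xs!j = t" using wp(3) \<open>pre = xs\<close> W(3) by simp
      ultimately show False using gdist_le[OF g q(1,2)] q W by auto
    next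
      case False
      define suf where "suf = drop (Suc j) xs"
      have sj: "Suc j < length xs" using False j by simp
      have ws: "walk E suf" "hd suf = xs!Suc j" "last suf = t" "suf \<noteq> []"
        using walk_drop[OF W(1) sj] sj W unfolding suf_def by (auto simp: hd_drop_conv_nth)
      have e: "(xs!j, xs!Suc j) \<in> E" using W(1) sj unfolding walk_def by blast
      have xs_eq: "xs = pre @ suf" unfolding pre_def suf_def by simp
      have "walk_len w xs = walk_len w pre + w (xs!j) (xs!Suc j) + walk_len w suf"
        using wl_append[OF wp(4) ws(4), of w] xs_eq wp ws by simp
      moreover have "walk_len w (q@suf) = walk_len w q + w (xs!j) (xs!Suc j) + walk_len w suf"
        using wl_append[OF qne ws(4), of w] q ws by simp
      moreover have "walk E (q@suf)" using walk_append[OF qne ws(4)] q ws e by simp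
      then have "gdist E w s t \<le> walk_len w (q@suf)"
        using gdist_le[OF g] q qne ws by simp
      ultimately show False using W q by linarith
    qed
  qed
  show ?thesis using le ge unfolding pre_def by linarith
qed

lemma DA_mono:
  assumes g: "wgraph V E w" and a: "(a,b) \<in> DA E w s t"
  shows "gdist E w s a < gdist E w s b"
proof -
  obtain xs i where xs: "shortest_path E w s t xs" "Suc i < length xs" "a = xs!i" "b = xs!Suc i"
    using a unfolding DA_def by blast
  have e: "(a,b) \<in> E" using xs unfolding shortest_path_def walk_def by blast
  have "take (Suc (Suc i)) xs = take (Suc i) xs @ [xs!Suc i]"
    using xs(2) by (simp add: take_Suc_conv_app_nth)
  moreover have "last (take (Suc i) xs) = xs!i" using last_take_nth[of i xs] xs(2) by simp
  moreover have "take (Suc i) xs \<noteq> []" using xs(2) by (cases xs) auto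
  ultimately have "walk_len w (take (Suc (Suc i)) xs) = walk_len w (take (Suc i) xs) + w a b"
    using wl_append[of "take (Suc i) xs" "[xs!Suc i]" w] xs(3,4) by simp
  moreover have "w a b > 0" using e g unfolding wgraph_def by blast
  ultimately show ?thesis using prefix_dist[OF g xs(1)] xs(2-4) by simp
qed


definition gdom :: "('a \<times> 'a) set \<Rightarrow> 'a \<Rightarrow> 'a \<Rightarrow> 'a \<Rightarrow> bool" where
  "gdom A s v x \<longleftrightarrow> v \<noteq> x \<and> (\<forall>xs. walk A xs \<and> hd xs = s \<and> last xs = x \<longrightarrow> v \<in> set xs)"

lemma walk_inj:
  fixes f :: "'a \<Rightarrow> real"
  assumes mono: "\<And>a b. (a,b)\<in>A \<Longrightarrow> f a < f b" and "walk A P" "i < length P" "j < length P" "P!i = P!j"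
  shows "i = j"
proof (rule ccontr)
  assume "i \<noteq> j"
  then have "i < j \<or> j < i" by arith
  then show False
  proof
    assume "i < j" then have "f (P!i) < f (P!j)" using mono_trancl[of A f, OF mono walk_nth_trancl[OF assms(2)]] assms by blast
    then show False using assms by simp
  next
    assume "j < i" then have "f (P!j) < f (P!i)" using mono_trancl[of A f, OF mono walk_nth_trancl[OF assms(2)]] assms by blast
    then show False using assms by simp
  qed
qed

lemma idom_generic:
  fixes f :: "'a \<Rightarrow> real"
  assumes mono: "\<And>a b. (a,b)\<in>A \<Longrightarrow> f a < f b" and reach: "(s,x) \<in> A\<^sup>+"
  shows "gdom A s (THE v. gdom A s v x \<and> (\<forall>u. gdom A s u x \<and> u \<noteq> v \<longrightarrow> gdom A s u v)) x"
proof -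
  obtain P where P: "walk A P" "hd P = s" "last P = x"
    using rtrancl_walk[OF trancl_into_rtrancl[OF reach]] by blast
  have Pne: "P \<noteq> []" using P(1) by (cases P) auto
  have inj: "\<And>i j. i < length P \<Longrightarrow> j < length P \<Longrightarrow> P!i = P!j \<Longrightarrow> i = j"
    using walk_inj[of A f, OF mono P(1)] by blast
  have sx: "s \<noteq> x" using mono_trancl[of A f, OF mono reach] by auto
  have domP: "\<exists>j<length P. P!j = v" if "gdom A s v x" for v
  proof -
    have "v \<in> set P" using that P unfolding gdom_def by blast
    then show ?thesis by (simp add: in_set_conv_nth)
  qed
  define J where "J = {j. j < length P \<and> gdom A s (P!j) x}"
  have "0 \<in> J" unfolding J_def gdom_def
  proof (intro CollectI conjI allI impI)
    show "0 < length P" using Pne by simp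
    show "P!0 \<noteq> x" using Pne P sx by (simp add: hd_conv_nth[symmetric])
    fix xs assume h: "walk A xs \<and> hd xs = s \<and> last xs = x"
    then have "xs \<noteq> []" by (cases xs) auto
    then show "P!0 \<in> set xs" using h Pne P by (metis hd_conv_nth hd_in_set)
  qed
  moreover have fJ: "finite J" unfolding J_def by simp
  ultimately have kJ: "Max J \<in> J" using Max_in[of J] by blast
  define k where "k = Max J"
  have k: "k < length P" "gdom A s (P!k) x" using kJ unfolding k_def J_def by auto
  have klast: "Suc k < length P"
  proof (rule ccontr)
    assume "\<not> Suc k < length P"
    then have "k = length P - 1" using k by simp
    then have "P!k = x" using P(3) Pne by (simp add: last_conv_nth)
    then show False using k unfolding gdom_def by simp
  qed
  have claim: "\<forall>u. gdom A s u x \<and> u \<noteq> P!k \<longrightarrow> gdom A s u (P!k)"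
  proof (intro allI impI)
    fix u assume u: "gdom A s u x \<and> u \<noteq> P!k"
    obtain j where j: "j < length P" "P!j = u" using domP u by blast
    have "j \<in> J" using j u unfolding J_def by simp
    then have "j \<le> k" unfolding k_def using fJ by simp
    with u j have jk: "j < k" by (metis le_neq_implies_less)
    show "gdom A s u (P!k)" unfolding gdom_def
    proof (intro conjI allI impI)
      show "u \<noteq> P!k" using u by simp
      fix Q assume Q: "walk A Q \<and> hd Q = s \<and> last Q = P!k"
      show "u \<in> set Q"
      proof (rule ccontr)
        assume nu: "u \<notin> set Q"
        define suf where "suf = drop (Suc k) P"
        have Qne: "Q \<noteq> []" using Q by (cases Q) auto
        have sufne: "suf \<noteq> []" using klast unfolding suf_def by simp
        have ws: "walk A suf" "hd suf = P!Suc k" "last suf = x"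
          using walk_drop[OF P(1) klast] klast P(3) unfolding suf_def by (auto simp: hd_drop_conv_nth)
        have e: "(P!k, P!Suc k) \<in> A" using P(1) klast unfolding walk_def by blast
        have "walk A (Q @ suf)" using walk_append[OF Qne sufne] Q ws e by simp
        moreover have "hd (Q@suf) = s" "last (Q@suf) = x" using Q Qne sufne ws by auto
        ultimately have "u \<in> set (Q@suf)" using u unfolding gdom_def by blast
        then have "u \<in> set suf" using nu by simp
        then obtain m where m: "m < length suf" "suf!m = u" by (meson in_set_conv_nth)
        then have "P!(Suc k + m) = u" "Suc k + m < length P" unfolding suf_def by auto
        then have "Suc k + m = j" using inj j by metis
        then show False using jk by simp
      qed
    qed
  qed
  have uniq: "\<And>v'. gdom A s v' x \<and> (\<forall>u. gdom A s u x \<and> u \<noteq> v' \<longrightarrow> gdom A s u v') \<Longrightarrow> v' = P!k"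
  proof (rule ccontr)
    fix v' assume v': "gdom A s v' x \<and> (\<forall>u. gdom A s u x \<and> u \<noteq> v' \<longrightarrow> gdom A s u v')"
      and ne: "v' \<noteq> P!k"
    have d1: "gdom A s (P!k) v'" using v' k ne by metis
    have d2: "gdom A s v' (P!k)" using claim v' ne by blast
    obtain j where j: "j < length P" "P!j = v'" using domP v' by blast
    have "walk A (take (Suc j) P)" "hd (take (Suc j) P) = s" "last (take (Suc j) P) = v'"
      using walk_take[OF P(1)] P(2) Pne last_take_nth[OF j(1)] j by (auto simp: hd_take)
    then have "P!k \<in> set (take (Suc j) P)" using d1 unfolding gdom_def by blast
    then obtain i where i: "i < length (take (Suc j) P)" "take (Suc j) P ! i = P!k" by (meson in_set_conv_nth)
    then have "i \<le> j" "P!i = P!k" "i < length P" by auto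
    then have kj: "k \<le> j" using inj k by metis
    have "walk A (take (Suc k) P)" "hd (take (Suc k) P) = s" "last (take (Suc k) P) = P!k"
      using walk_take[OF P(1)] P(2) Pne last_take_nth[OF k(1)] by (auto simp: hd_take)
    then have "v' \<in> set (take (Suc k) P)" using d2 unfolding gdom_def by blast
    then obtain i' where i': "i' < length (take (Suc k) P)" "take (Suc k) P ! i' = v'" by (meson in_set_conv_nth)
    then have "i' \<le> k" "P!i' = P!j" "i' < length P" using j by auto
    then have "j \<le> k" using inj j by metis
    then have "j = k" using kj by simp
    then show False using j ne by simp
  qed
  have "(THE v. gdom A s v x \<and> (\<forall>u. gdom A s u x \<and> u \<noteq> v \<longrightarrow> gdom A s u v)) = P!k"
    by (rule the_equality) (use k claim uniq in blast)+
  then show ?thesis using k by simp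
qed


lemma sp_walk: "shortest_path E w s t xs \<Longrightarrow> walk (DA E w s t) xs"
  unfolding walk_def DA_def shortest_path_def by blast

lemma DV_reach:
  assumes "x \<in> DV E w s t"
  shows "(s,x) \<in> (DA E w s t)\<^sup>* \<and> (x,t) \<in> (DA E w s t)\<^sup>*"
proof -
  obtain xs where xs: "shortest_path E w s t xs" "x \<in> set xs" using assms unfolding DV_def by blast
  have "hd xs = s" "last xs = t" using xs(1) unfolding shortest_path_def by auto
  then show ?thesis using walk_mem[OF sp_walk[OF xs(1)] xs(2)] by simp
qed

lemma s_dom_eq: "s_dom E w s t = gdom (DA E w s t) s"
  by (intro ext) (simp add: s_dom_def gdom_def dpath_def)

lemma t_dom_eq: "t_dom E w s t = gdom ((DA E w s t)\<inverse>) t"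
proof (intro ext)
  fix v x
  let ?A = "DA E w s t"
  have "(\<forall>xs. walk ?A xs \<and> hd xs = x \<and> last xs = t \<longrightarrow> v \<in> set xs) =
        (\<forall>xs. walk (?A\<inverse>) xs \<and> hd xs = t \<and> last xs = x \<longrightarrow> v \<in> set xs)"
  proof
    assume h: "\<forall>xs. walk ?A xs \<and> hd xs = x \<and> last xs = t \<longrightarrow> v \<in> set xs"
    show "\<forall>xs. walk (?A\<inverse>) xs \<and> hd xs = t \<and> last xs = x \<longrightarrow> v \<in> set xs"
    proof (intro allI impI)
      fix xs assume a: "walk (?A\<inverse>) xs \<and> hd xs = t \<and> last xs = x"
      then have ne: "xs \<noteq> []" by (cases xs) auto
      have "walk ?A (rev xs)" using walk_rev[of "?A\<inverse>" xs] a by simp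
      moreover have "hd (rev xs) = x" "last (rev xs) = t" using a ne by (auto simp: hd_rev last_rev)
      ultimately show "v \<in> set xs" using h by fastforce
    qed
  next
    assume h: "\<forall>xs. walk (?A\<inverse>) xs \<and> hd xs = t \<and> last xs = x \<longrightarrow> v \<in> set xs"
    show "\<forall>xs. walk ?A xs \<and> hd xs = x \<and> last xs = t \<longrightarrow> v \<in> set xs"
    proof (intro allI impI)
      fix xs assume a: "walk ?A xs \<and> hd xs = x \<and> last xs = t"
      then have ne: "xs \<noteq> []" by (cases xs) auto
      have "walk (?A\<inverse>) (rev xs)" using walk_rev[of "?A" xs] a by simp
      moreover have "hd (rev xs) = t" "last (rev xs) = x" using a ne by (auto simp: hd_rev last_rev)
      ultimately show "v \<in> set xs" using h by fastforce
    qed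
  qed
  then show "t_dom E w s t v x = gdom (?A\<inverse>) t v x"
    unfolding t_dom_def gdom_def dpath_def by simp
qed

theorem corollary1:
  fixes V :: "'a set" and E :: "('a \<times> 'a) set" and w :: "'a \<Rightarrow> 'a \<Rightarrow> real"
    and s t x y :: 'a
  assumes "wgraph V E w" and "s \<in> V" and "t \<in> V"
    and "x \<in> DV E w s t" and "y \<in> DV E w s t"
    and "prec E w s t y x"
  shows "(gdist E w s (I_s E w s t x) < gdist E w s y \<longrightarrow> prec E w s t (I_s E w s t x) y)
       \<and> (gdist E w s (I_t E w s t y) > gdist E w s x \<longrightarrow> prec E w s t x (I_t E w s t y))"
proof -
  define A where "A = DA E w s t"
  define f where "f = gdist E w s"
  have mono: "\<And>a b. (a,b)\<in>A \<Longrightarrow> f a < f b" unfolding A_def f_def using DA_mono[OF assms(1)] by blast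
  have mono': "\<And>a b. (a,b)\<in>A\<inverse> \<Longrightarrow> (\<lambda>a. - f a) a < (\<lambda>a. - f a) b" using mono by simp
  have yx: "(y,x) \<in> A\<^sup>+" using assms(6) unfolding prec_def A_def .
  have sy: "(s,y) \<in> A\<^sup>*" and xt: "(x,t) \<in> A\<^sup>*"
    using DV_reach[OF assms(5)] DV_reach[OF assms(4)] unfolding A_def by auto
  have sx: "(s,x) \<in> A\<^sup>+" using sy yx by (meson rtrancl_trancl_trancl)
  have yt: "(y,t) \<in> A\<^sup>+" using yx xt by (meson trancl_rtrancl_trancl)
  then have ty: "(t,y) \<in> (A\<inverse>)\<^sup>+" by (simp add: trancl_converse)
  have Is: "I_s E w s t x = (THE v. gdom A s v x \<and> (\<forall>u. gdom A s u x \<and> u \<noteq> v \<longrightarrow> gdom A s u v))"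
    unfolding I_s_def s_dom_eq A_def ..
  have It: "I_t E w s t y = (THE v. gdom (A\<inverse>) t v y \<and> (\<forall>u. gdom (A\<inverse>) t u y \<and> u \<noteq> v \<longrightarrow> gdom (A\<inverse>) t u v))"
    unfolding I_t_def t_dom_eq A_def ..
  have P1: "prec E w s t (I_s E w s t x) y" if lt: "f (I_s E w s t x) < f y"
  proof -
    define v where "v = I_s E w s t x"
    have dv: "gdom A s v x" using idom_generic[of A f, OF mono sx] unfolding v_def Is .
    obtain R where R: "walk A R" "hd R = s" "last R = x"
      "\<forall>v\<in>set R. ((s,v)\<in>A\<^sup>* \<and> (v,y)\<in>A\<^sup>*) \<or> ((y,v)\<in>A\<^sup>* \<and> (v,x)\<in>A\<^sup>*)"
      using join[OF sy trancl_into_rtrancl[OF yx]] by blast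
    have "v \<in> set R" using dv R unfolding gdom_def by blast
    then have "(v,y)\<in>A\<^sup>* \<or> (y,v)\<in>A\<^sup>*" using R(4) by blast
    then show ?thesis
    proof
      assume "(v,y)\<in>A\<^sup>*"
      then have "v = y \<or> (v,y) \<in> A\<^sup>+" by (meson rtranclD)
      then show ?thesis using lt unfolding v_def prec_def A_def by auto
    next
      assume "(y,v)\<in>A\<^sup>*"
      then have "f y \<le> f v" using mono_rtrancl[of A f, OF mono] by blast
      then show ?thesis using lt unfolding v_def by simp
    qed
  qed
  have P2: "prec E w s t x (I_t E w s t y)" if lt: "f (I_t E w s t y) > f x"
  proof -
    define v where "v = I_t E w s t y"
    have dv: "gdom (A\<inverse>) t v y" using idom_generic[of "A\<inverse>" "\<lambda>a. - f a", OF mono' ty] unfolding v_def It .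
    obtain R where R: "walk A R" "hd R = y" "last R = t"
      "\<forall>v\<in>set R. ((y,v)\<in>A\<^sup>* \<and> (v,x)\<in>A\<^sup>*) \<or> ((x,v)\<in>A\<^sup>* \<and> (v,t)\<in>A\<^sup>*)"
      using join[OF trancl_into_rtrancl[OF yx] xt] by blast
    have ne: "R \<noteq> []" using R(1) by (cases R) auto
    have "walk (A\<inverse>) (rev R)" "hd (rev R) = t" "last (rev R) = y"
      using walk_rev[OF R(1)] R ne by (auto simp: hd_rev last_rev)
    then have "v \<in> set (rev R)" using dv unfolding gdom_def by blast
    then have "(v,x)\<in>A\<^sup>* \<or> (x,v)\<in>A\<^sup>*" using R(4) by auto
    then show ?thesis
    proof
      assume "(x,v)\<in>A\<^sup>*"
      then have "x = v \<or> (x,v) \<in> A\<^sup>+" by (meson rtranclD)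
      then show ?thesis using lt unfolding v_def prec_def A_def by auto
    next
      assume "(v,x)\<in>A\<^sup>*"
      then have "f v \<le> f x" using mono_rtrancl[of A f, OF mono] by blast
      then show ?thesis using lt unfolding v_def by simp
    qed
  qed
  show ?thesis using P1 P2 unfolding f_def by blast
qed

end
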